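(* Let $Q$ be a diassociative loop. Then the assignment $\sigma(L_x)=R_x$, $\sigma(L_x^{-1})=R_x^{-1}$, $\sigma(R_x)=M_x^{-1}$, $\sigma(R_x^{-1})=M_x$ (for $x\in Q$, where $M_x=R_xL_x$) defines a well-defined mapping $\sigma:\{L_x,R_x,L_x^{-1},R_x^{-1}:x\in Q\}\to\mathrm{Mlt}(Q)$ if and only if $x^3=1$ for every $x\in\mathrm{Com}(Q)$.
   Context: A loop is a magma with identity $1$ in which the left translations $L_x(y)=xy$ and right translations $R_x(y)=yx$ are bijections; it is diassociative if any two elements generate a subgroup. $\mathrm{Mlt}(Q)$ is the permutation group generated by all $L_x,R_x$. The commutant is $\mathrm{Com}(Q)=\{x\in Q: xy=yx\text{ for all }y\in Q\}$. Well-definedness means that whenever two of the permutations $L_x,R_x,L_x^{-1},R_x^{-1},L_y,\dots$ coincide, their prescribed images coincide. *)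

theory Defs
  imports Main
begin

definition is_loop :: "('a \<Rightarrow> 'a \<Rightarrow> 'a) \<Rightarrow> 'a \<Rightarrow> bool" where
  "is_loop mult e \<longleftrightarrow> (\<forall>x. mult e x = x \<and> mult x e = x)
     \<and> (\<forall>x. bij (mult x)) \<and> (\<forall>x. bij (\<lambda>y. mult y x))"

definition Lt :: "('a \<Rightarrow> 'a \<Rightarrow> 'a) \<Rightarrow> 'a \<Rightarrow> 'a \<Rightarrow> 'a" where
  "Lt mult x = (\<lambda>y. mult x y)"

definition Rt :: "('a \<Rightarrow> 'a \<Rightarrow> 'a) \<Rightarrow> 'a \<Rightarrow> 'a \<Rightarrow> 'a" where
  "Rt mult x = (\<lambda>y. mult y x)"

text \<open>M_x = R_x L_x (composition R_x after L_x; in a diassociative loop this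
  coincides with L_x after R_x).\<close>
definition Mt :: "('a \<Rightarrow> 'a \<Rightarrow> 'a) \<Rightarrow> 'a \<Rightarrow> 'a \<Rightarrow> 'a" where
  "Mt mult x = Rt mult x \<circ> Lt mult x"

inductive_set gen2 :: "('a \<Rightarrow> 'a \<Rightarrow> 'a) \<Rightarrow> 'a \<Rightarrow> 'a \<Rightarrow> 'a \<Rightarrow> 'a set"
  for mult e x y where
  g_e: "e \<in> gen2 mult e x y"
| g_x: "x \<in> gen2 mult e x y"
| g_y: "y \<in> gen2 mult e x y"
| g_mult: "a \<in> gen2 mult e x y \<Longrightarrow> b \<in> gen2 mult e x y \<Longrightarrow> mult a b \<in> gen2 mult e x y"
| g_ldiv: "a \<in> gen2 mult e x y \<Longrightarrow> b \<in> gen2 mult e x y \<Longrightarrow> inv (Lt mult a) b \<in> gen2 mult e x y"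
| g_rdiv: "a \<in> gen2 mult e x y \<Longrightarrow> b \<in> gen2 mult e x y \<Longrightarrow> inv (Rt mult b) a \<in> gen2 mult e x y"

definition diassociative :: "('a \<Rightarrow> 'a \<Rightarrow> 'a) \<Rightarrow> 'a \<Rightarrow> bool" where
  "diassociative mult e \<longleftrightarrow> (\<forall>x y. \<forall>a\<in>gen2 mult e x y. \<forall>b\<in>gen2 mult e x y. \<forall>c\<in>gen2 mult e x y.
      mult (mult a b) c = mult a (mult b c))"

definition Com :: "('a \<Rightarrow> 'a \<Rightarrow> 'a) \<Rightarrow> 'a set" where
  "Com mult = {x. \<forall>y. mult x y = mult y x}"

datatype tkind = KL | KLinv | KR | KRinv

fun tperm :: "('a \<Rightarrow> 'a \<Rightarrow> 'a) \<Rightarrow> tkind \<Rightarrow> 'a \<Rightarrow> 'a \<Rightarrow> 'a" where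
  "tperm mult KL x = Lt mult x"
| "tperm mult KLinv x = inv (Lt mult x)"
| "tperm mult KR x = Rt mult x"
| "tperm mult KRinv x = inv (Rt mult x)"

fun sigma_img :: "('a \<Rightarrow> 'a \<Rightarrow> 'a) \<Rightarrow> tkind \<Rightarrow> 'a \<Rightarrow> 'a \<Rightarrow> 'a" where
  "sigma_img mult KL x = Rt mult x"
| "sigma_img mult KLinv x = inv (Rt mult x)"
| "sigma_img mult KR x = inv (Mt mult x)"
| "sigma_img mult KRinv x = Mt mult x"

definition sigma_well_defined :: "('a \<Rightarrow> 'a \<Rightarrow> 'a) \<Rightarrow> bool" where
  "sigma_well_defined mult \<longleftrightarrow> (\<forall>k1 x1 k2 x2.
     tperm mult k1 x1 = tperm mult k2 x2 \<longrightarrow> sigma_img mult k1 x1 = sigma_img mult k2 x2)"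

end

theory Submission
  imports Defs
begin

lemma loopE:
  assumes "is_loop mult e"
  shows "mult e x = x" "mult x e = x" "bij (mult x)" "bij (\<lambda>y. mult y x)"
  using assms unfolding is_loop_def by auto

lemma LtE: "Lt mult x = mult x" unfolding Lt_def by simp

lemma assocG:
  assumes "diassociative mult e" "a \<in> gen2 mult e x y" "b \<in> gen2 mult e x y" "c \<in> gen2 mult e x y"
  shows "mult (mult a b) c = mult a (mult b c)"
  using assms unfolding diassociative_def by blast

lemma gx: fixes mult e x y shows "x \<in> gen2 mult e x y" by (rule gen2.g_x)
lemma gy: fixes mult e x y shows "y \<in> gen2 mult e x y" by (rule gen2.g_y)

definition li :: "('a \<Rightarrow> 'a \<Rightarrow> 'a) \<Rightarrow> 'a \<Rightarrow> 'a \<Rightarrow> 'a" where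
  "li mult e x = inv (mult x) e"

lemma li_mem: fixes mult e x y shows "li mult e x \<in> gen2 mult e x y"
proof -
  have "inv (Lt mult x) e \<in> gen2 mult e x y" by (intro gen2.g_ldiv gen2.g_x gen2.g_e)
  thus ?thesis by (simp add: li_def LtE)
qed

lemma li_mem2: fixes mult e x y shows "li mult e y \<in> gen2 mult e x y"
proof -
  have "inv (Lt mult y) e \<in> gen2 mult e x y" by (intro gen2.g_ldiv gen2.g_y gen2.g_e)
  thus ?thesis by (simp add: li_def LtE)
qed

context
  fixes mult :: "'a \<Rightarrow> 'a \<Rightarrow> 'a" and e :: 'a
  assumes L: "is_loop mult e" and D: "diassociative mult e"
begin

lemma r_li: "mult x (li mult e x) = e"
  unfolding li_def using loopE(3)[OF L, of x] by (simp add: bij_is_surj surj_f_inv_f)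

lemma l_li: "mult (li mult e x) x = e"
proof -
  have "mult x (mult (li mult e x) x) = mult (mult x (li mult e x)) x"
    using assocG[OF D gx[where mult=mult and e=e and x=x and y=x] li_mem[where mult=mult and e=e and x=x and y=x] gx[where mult=mult and e=e and x=x and y=x]] by simp
  also have "\<dots> = mult x e" using r_li loopE[OF L] by simp
  finally show ?thesis using loopE(3)[OF L, of x] by (simp add: bij_is_inj inj_eq)
qed

lemma F1: "mult x (mult (li mult e x) z) = z"
  using assocG[OF D gx[where mult=mult and e=e and x=x and y=z] li_mem[where mult=mult and e=e and x=x and y=z] gy[where mult=mult and e=e and x=x and y=z]] r_li loopE[OF L] by simp

lemma F1': "mult (li mult e x) (mult x z) = z"
  using assocG[OF D li_mem[where mult=mult and e=e and x=x and y=z] gx[where mult=mult and e=e and x=x and y=z] gy[where mult=mult and e=e and x=x and y=z]] l_li loopE[OF L] by simp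

lemma F2: "mult (mult z x) (li mult e x) = z"
  using assocG[OF D gy[where mult=mult and e=e and x=x and y=z] gx[where mult=mult and e=e and x=x and y=z] li_mem[where mult=mult and e=e and x=x and y=z]] r_li loopE[OF L] by simp

lemma F2': "mult (mult z (li mult e x)) x = z"
  using assocG[OF D gy[where mult=mult and e=e and x=x and y=z] li_mem[where mult=mult and e=e and x=x and y=z] gx[where mult=mult and e=e and x=x and y=z]] l_li loopE[OF L] by simp

lemma invL: "inv (Lt mult x) = Lt mult (li mult e x)"
  unfolding LtE by (rule inv_unique_comp) (auto simp: fun_eq_iff F1 F1')

lemma invR: "inv (Rt mult x) = Rt mult (li mult e x)"
  unfolding Rt_def by (rule inv_unique_comp) (auto simp: fun_eq_iff F2 F2')

lemma li_li: "li mult e (li mult e x) = x"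
  unfolding li_def[of mult e "li mult e x"] using l_li[of x] loopE(3)[OF L, of "li mult e x"]
  by (simp add: bij_is_inj inv_f_eq)

lemma Mt_app: "Mt mult x z = mult (mult x z) x"
  by (simp add: Mt_def Rt_def Lt_def)

lemma invM: "inv (Mt mult x) = Mt mult (li mult e x)"
proof (rule inv_unique_comp)
  show "Mt mult x \<circ> Mt mult (li mult e x) = id"
  proof
    fix z
    have m: "mult (li mult e x) z \<in> gen2 mult e x z" by (intro gen2.g_mult li_mem gen2.g_y)
    have "mult x (mult (mult (li mult e x) z) (li mult e x))
        = mult (mult x (mult (li mult e x) z)) (li mult e x)"
      using assocG[OF D gen2.g_x m li_mem] by simp
    thus "(Mt mult x \<circ> Mt mult (li mult e x)) z = id z"
      by (simp add: Mt_app F1 F2')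
  qed
  show "Mt mult (li mult e x) \<circ> Mt mult x = id"
  proof
    fix z
    have m: "mult x z \<in> gen2 mult e x z" by (intro gen2.g_mult gen2.g_x gen2.g_y)
    have "mult (li mult e x) (mult (mult x z) x)
        = mult (mult (li mult e x) (mult x z)) x"
      using assocG[OF D li_mem m gen2.g_x] by simp
    thus "(Mt mult (li mult e x) \<circ> Mt mult x) z = id z"
      by (simp add: Mt_app F1' F2)
  qed
qed

lemma core:
  assumes C: "u \<in> Com mult" and c3: "mult (mult u u) u = e"
  shows "mult z u = mult (mult (li mult e u) z) (li mult e u)"
proof -
  let ?G = "gen2 mult e u z"
  have u: "u \<in> ?G" by (rule gx)
  have z: "z \<in> ?G" by (rule gy)
  have uu: "mult u u \<in> ?G" by (intro gen2.g_mult u)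
  have A: "\<And>a b c. a \<in> ?G \<Longrightarrow> b \<in> ?G \<Longrightarrow> c \<in> ?G \<Longrightarrow> mult (mult a b) c = mult a (mult b c)"
    using assocG[OF D] by blast
  have cm: "\<And>y. mult u y = mult y u" using C unfolding Com_def by blast
  have "mult u (mult u u) = e" using A[OF u u u] c3 by simp
  hence liu: "li mult e u = mult u u"
    using r_li[of u] loopE(3)[OF L, of u] by (metis bij_is_inj injD)
  have "mult (mult u u) z = mult z (mult u u)"
    using A[OF u u z] A[OF z u u] A[OF u z u] cm[of z] by simp
  hence "mult (mult (li mult e u) z) (li mult e u) = mult (mult z (mult u u)) (mult u u)"
    using liu by simp
  also have "\<dots> = mult z (mult (mult u u) (mult u u))" using A[OF z uu uu] .
  also have "mult (mult u u) (mult u u) = u"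
    using A[OF uu u u] c3 loopE(1)[OF L] by simp
  finally show ?thesis by simp
qed

lemma par_form:
  "\<exists>u. (k \<in> {KL, KLinv} \<and> tperm mult k x = Lt mult u \<and> sigma_img mult k x = Rt mult u)
     \<or> (k \<notin> {KL, KLinv} \<and> tperm mult k x = Rt mult u \<and> sigma_img mult k x = Mt mult (li mult e u))"
  by (cases k) (auto simp: invL invR invM li_li)

lemma LR_eq:
  assumes "Lt mult u = Rt mult v"
  shows "u = v" "u \<in> Com mult"
proof -
  have "Lt mult u e = Rt mult v e" using assms by simp
  thus uv: "u = v" using loopE[OF L] by (simp add: Lt_def Rt_def)
  show "u \<in> Com mult" using assms uv unfolding Com_def Lt_def Rt_def by (auto simp: fun_eq_iff)
qed

lemma LR_img:
  assumes "Lt mult u = Rt mult v" and H: "\<forall>x\<in>Com mult. mult (mult x x) x = e"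
  shows "Rt mult u = Mt mult (li mult e v)"
proof -
  have uv: "u = v" and C: "u \<in> Com mult" using LR_eq[OF assms(1)] by auto
  show ?thesis unfolding uv[symmetric]
    using core[OF C H[rule_format, OF C]] by (auto simp: fun_eq_iff Rt_def Mt_app)
qed

lemma LL_eq: "Lt mult u = Lt mult v \<Longrightarrow> u = v"
  by (drule fun_cong[where x=e]) (simp add: Lt_def loopE[OF L])

lemma RR_eq: "Rt mult u = Rt mult v \<Longrightarrow> u = v"
  by (drule fun_cong[where x=e]) (simp add: Rt_def loopE[OF L])

end

theorem lemma6p1:
  fixes mult :: "'a \<Rightarrow> 'a \<Rightarrow> 'a" and e :: 'a
  assumes "is_loop mult e" and "diassociative mult e"
  shows "sigma_well_defined mult \<longleftrightarrow> (\<forall>x\<in>Com mult. mult (mult x x) x = e)"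
proof
  assume W: "sigma_well_defined mult"
  show "\<forall>x\<in>Com mult. mult (mult x x) x = e"
  proof
    fix x assume C: "x \<in> Com mult"
    have "tperm mult KL x = tperm mult KR x"
      using C unfolding Com_def by (auto simp: fun_eq_iff Lt_def Rt_def)
    hence eq: "Rt mult x = inv (Mt mult x)" using W unfolding sigma_well_defined_def
      by (metis sigma_img.simps(1,3))
    have "bij (Mt mult x)" unfolding Mt_def Lt_def Rt_def
      using loopE(3,4)[OF assms(1)] by (metis bij_comp)
    hence "Mt mult x (inv (Mt mult x) e) = e" by (simp add: bij_is_surj surj_f_inv_f)
    thus "mult (mult x x) x = e" unfolding eq[symmetric]
      by (simp add: Mt_def Lt_def Rt_def loopE(1)[OF assms(1)])
  qed
next
  assume H: "\<forall>x\<in>Com mult. mult (mult x x) x = e"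
  show "sigma_well_defined mult"
    unfolding sigma_well_defined_def
  proof (intro allI impI)
    fix k1 x1 k2 x2
    assume T: "tperm mult k1 x1 = tperm mult k2 x2"
    obtain u where U: "(k1 \<in> {KL, KLinv} \<and> tperm mult k1 x1 = Lt mult u \<and> sigma_img mult k1 x1 = Rt mult u)
     \<or> (k1 \<notin> {KL, KLinv} \<and> tperm mult k1 x1 = Rt mult u \<and> sigma_img mult k1 x1 = Mt mult (li mult e u))"
      using par_form[OF assms] by blast
    obtain v where V: "(k2 \<in> {KL, KLinv} \<and> tperm mult k2 x2 = Lt mult v \<and> sigma_img mult k2 x2 = Rt mult v)
     \<or> (k2 \<notin> {KL, KLinv} \<and> tperm mult k2 x2 = Rt mult v \<and> sigma_img mult k2 x2 = Mt mult (li mult e v))"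
      using par_form[OF assms] by blast
    from U show "sigma_img mult k1 x1 = sigma_img mult k2 x2"
    proof (elim disjE conjE)
      assume u1: "tperm mult k1 x1 = Lt mult u" "sigma_img mult k1 x1 = Rt mult u"
      from V show ?thesis
      proof (elim disjE conjE)
        assume v1: "tperm mult k2 x2 = Lt mult v" "sigma_img mult k2 x2 = Rt mult v"
        have "Lt mult u = Lt mult v" using T unfolding u1(1) v1(1) .
        hence "u = v" by (rule LL_eq[OF assms])
        thus ?thesis unfolding u1(2) v1(2) by (rule arg_cong)
      next
        assume v1: "tperm mult k2 x2 = Rt mult v" "sigma_img mult k2 x2 = Mt mult (li mult e v)"
        have "Lt mult u = Rt mult v" using T unfolding u1(1) v1(1) .
        thus ?thesis unfolding u1(2) v1(2) by (rule LR_img[OF assms _ H])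
      qed
    next
      assume u1: "tperm mult k1 x1 = Rt mult u" "sigma_img mult k1 x1 = Mt mult (li mult e u)"
      from V show ?thesis
      proof (elim disjE conjE)
        assume v1: "tperm mult k2 x2 = Lt mult v" "sigma_img mult k2 x2 = Rt mult v"
        have "Lt mult v = Rt mult u" using T unfolding u1(1) v1(1) by (rule sym)
        thus ?thesis unfolding u1(2) v1(2) by (rule LR_img[OF assms _ H, symmetric])
      next
        assume v1: "tperm mult k2 x2 = Rt mult v" "sigma_img mult k2 x2 = Mt mult (li mult e v)"
        have "Rt mult u = Rt mult v" using T unfolding u1(1) v1(1) .
        hence "u = v" by (rule RR_eq[OF assms])
        thus ?thesis unfolding u1(2) v1(2) by simp
      qed
    qed
  qed
qed

end
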